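(* Let $\varphi$ be a rational self-map of $\mathbb{D}$ having order of contact $n$ (even) with $\partial\mathbb{D}$ at $\zeta$, let $\lambda=\varphi(\zeta)$, and let $\sigma$ be a branch of $\varphi_e^{-1}$ defined on a neighborhood of $\lambda$ with $\sigma(\lambda)=\zeta$. Then $\sigma$ has order of contact $n$ with $\partial\mathbb{D}$ at $\lambda$.
   Context: $\varphi_e=\rho\circ\varphi\circ\rho$ with $\rho(z)=1/\bar z$; since $\varphi_e$ maps $\{|z|>1\}$ into itself, $\varphi_e^{-1}(\mathbb{D})\subset\mathbb{D}$, so $\sigma$ maps points of $\mathbb{D}$ near $\lambda$ into $\mathbb{D}$. Order of contact $c$ of a map $\varphi$ (analytic on $V\cap\mathbb{D}$ for a neighborhood $V$ of $\zeta$, with values in $\mathbb{D}$) at $\zeta$: $\lim_{z\to\zeta}\varphi(z)=\varphi(\zeta)\in\partial\mathbb{D}$ exists and $\frac{1-|\varphi(e^{i\theta})|^2}{|\varphi(\zeta)-\varphi(e^{i\theta})|^c}$ is essentially bounded above and away from zero as $e^{i\theta}\to\zeta$. *)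

theory Defs
  imports "HOL-Analysis.Analysis" "HOL-Computational_Algebra.Polynomial"
begin

definition rat_fun :: "complex poly \<Rightarrow> complex poly \<Rightarrow> complex \<Rightarrow> complex" where
  "rat_fun p q z = poly p z / poly q z"

definition rational_selfmap :: "complex poly \<Rightarrow> complex poly \<Rightarrow> bool" where
  "rational_selfmap p q \<longleftrightarrow> q \<noteq> 0 \<and> coprime p q \<and>
     (\<forall>z\<in>ball 0 1. poly q z \<noteq> 0 \<and> rat_fun p q z \<in> ball 0 1)"

definition rho :: "complex \<Rightarrow> complex" where
  "rho z = 1 / cnj z"

definition ext_map :: "(complex \<Rightarrow> complex) \<Rightarrow> complex \<Rightarrow> complex" where
  "ext_map f = rho \<circ> f \<circ> rho"

definition order_of_contact :: "(complex \<Rightarrow> complex) \<Rightarrow> complex \<Rightarrow> real \<Rightarrow> bool" where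
  "order_of_contact f \<zeta> c \<longleftrightarrow>
     \<zeta> \<in> sphere 0 1 \<and>
     (\<exists>V. open V \<and> \<zeta> \<in> V \<and> f holomorphic_on (V \<inter> ball 0 1) \<and>
          f ` (V \<inter> ball 0 1) \<subseteq> ball 0 1) \<and>
     (f \<longlongrightarrow> f \<zeta>) (at \<zeta> within ball 0 1) \<and> f \<zeta> \<in> sphere 0 1 \<and>
     (\<exists>\<delta> A B. 0 < \<delta> \<and> 0 < A \<and> 0 < B \<and>
        (AE \<theta> in lborel. dist (cis \<theta>) \<zeta> < \<delta> \<longrightarrow>
           A \<le> (1 - (norm (f (cis \<theta>)))\<^sup>2) / (norm (f \<zeta> - f (cis \<theta>))) powr c \<and>
           (1 - (norm (f (cis \<theta>)))\<^sup>2) / (norm (f \<zeta> - f (cis \<theta>))) powr c \<le> B))"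

end

theory Submission
  imports Defs "HOL-Complex_Analysis.Cauchy_Integral_Formula"
begin

lemma lin:
  assumes hol: "f holomorphic_on S" and S: "open S" "z0 \<in> S" and e: "\<epsilon> > 0"
  shows "\<exists>r>0. ball z0 r \<subseteq> S \<and> (\<forall>x\<in>ball z0 r. \<forall>y\<in>ball z0 r.
           norm (f x - f y - deriv f z0 * (x - y)) \<le> \<epsilon> * norm (x - y))"
proof -
  have "continuous_on S (deriv f)"
    using hol S by (intro holomorphic_on_imp_continuous_on holomorphic_deriv) auto
  then have "isCont (deriv f) z0" using S continuous_on_eq_continuous_at by blast
  then obtain d where d: "d > 0" "\<And>z. dist z z0 < d \<Longrightarrow> dist (deriv f z) (deriv f z0) < \<epsilon>"
    using e unfolding continuous_at_eps_delta by blast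
  obtain r0 where r0: "r0 > 0" "ball z0 r0 \<subseteq> S" using S openE by blast
  define r where "r = min d r0"
  have r: "r > 0" "ball z0 r \<subseteq> S" using d r0 by (auto simp: r_def)
  have "norm ((\<lambda>z. f z - deriv f z0 * z) x - (\<lambda>z. f z - deriv f z0 * z) y) \<le> \<epsilon> * norm (x - y)"
    if "x \<in> ball z0 r" "y \<in> ball z0 r" for x y
  proof (rule field_differentiable_bound[where f' = "\<lambda>z. deriv f z - deriv f z0"])
    show "convex (ball z0 r)" by simp
    fix z assume z: "z \<in> ball z0 r"
    then have "z \<in> S" using r by auto
    then have "(f has_field_derivative deriv f z) (at z)"
      using hol S by (meson holomorphic_derivI)
    then have "((\<lambda>z. f z - deriv f z0 * z) has_field_derivative deriv f z - deriv f z0 * 1) (at z)"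
      by (intro DERIV_diff DERIV_cmult DERIV_ident)
    then show "((\<lambda>z. f z - deriv f z0 * z) has_field_derivative deriv f z - deriv f z0) (at z within ball z0 r)"
      by (simp add: has_field_derivative_at_within)
    have "dist z z0 < d" using z by (auto simp: r_def dist_commute)
    then show "norm (deriv f z - deriv f z0) \<le> \<epsilon>" using d(2)[of z] by (simp add: dist_norm)
  qed (use that in auto)
  moreover have "(\<lambda>z. f z - deriv f z0 * z) x - (\<lambda>z. f z - deriv f z0 * z) y = f x - f y - deriv f z0 * (x - y)" for x y
    by (simp add: right_diff_distrib)
  ultimately show ?thesis using r by (intro exI[of _ r]) auto
qed

lemma kappa_aux:
  fixes f :: "complex \<Rightarrow> complex"
  assumes hol: "f holomorphic_on S" "open S" "\<zeta> \<in> S" and z1: "cmod \<zeta> = 1" and l1: "cmod (f \<zeta>) = 1"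
    and inside: "\<And>z. z \<in> ball 0 1 \<Longrightarrow> z \<in> S \<Longrightarrow> cmod (f z) < 1"
    and e: "\<epsilon> > 0"
  shows "\<exists>r>0. \<forall>\<omega>. cmod \<omega> < r \<longrightarrow> cmod (1 + \<omega>) < 1 \<longrightarrow>
           Re (cnj (f \<zeta>) * deriv f \<zeta> * \<zeta> * \<omega>) < \<epsilon> * cmod \<omega>"
proof -
  obtain r where r: "r > 0" "ball \<zeta> r \<subseteq> S"
    "\<And>x y. x\<in>ball \<zeta> r \<Longrightarrow> y\<in>ball \<zeta> r \<Longrightarrow> norm (f x - f y - deriv f \<zeta> * (x - y)) \<le> \<epsilon> * norm (x - y)"
    using lin[OF hol e] by blast
  show ?thesis
  proof (intro exI[of _ r] conjI allI impI r(1))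
    fix \<omega> assume w: "cmod \<omega> < r" "cmod (1 + \<omega>) < 1"
    define x where "x = \<zeta> * (1 + \<omega>)"
    have xz: "x - \<zeta> = \<zeta> * \<omega>" by (simp add: x_def algebra_simps)
    have nx: "cmod (x - \<zeta>) = cmod \<omega>" using z1 by (simp add: xz norm_mult)
    have xb: "x \<in> ball \<zeta> r" using nx w dist_commute[of \<zeta> x] by (simp add: dist_norm)
    have x1: "x \<in> ball 0 1" using w z1 by (simp add: x_def norm_mult)
    have fx: "cmod (f x) < 1" using inside x1 xb r(2) by auto
    define E where "E = f x - f \<zeta> - deriv f \<zeta> * (x - \<zeta>)"
    have E: "cmod E \<le> \<epsilon> * cmod \<omega>" using r(3)[OF xb, of \<zeta>] r(1) nx by (simp add: E_def)
    have lam: "cnj (f \<zeta>) * f \<zeta> = 1"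
      proof -
      have "f \<zeta> * cnj (f \<zeta>) = complex_of_real ((cmod (f \<zeta>))\<^sup>2)" by (rule complex_norm_square[symmetric])
      then show ?thesis using l1 by (simp add: mult.commute)
    qed
    have fx': "f x = f \<zeta> + deriv f \<zeta> * (\<zeta> * \<omega>) + E" by (simp add: E_def xz)
    have "cnj (f \<zeta>) * f x = cnj (f \<zeta>) * f \<zeta> + cnj (f \<zeta>) * deriv f \<zeta> * \<zeta> * \<omega> + cnj (f \<zeta>) * E"
      unfolding fx' by (simp only: distrib_left mult.assoc)
    then have eq: "Re (cnj (f \<zeta>) * f x) = 1 + Re (cnj (f \<zeta>) * deriv f \<zeta> * \<zeta> * \<omega>) + Re (cnj (f \<zeta>) * E)"
      using lam by simp
    have "Re (cnj (f \<zeta>) * f x) \<le> cmod (cnj (f \<zeta>) * f x)" by (rule complex_Re_le_cmod)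
    also have "\<dots> = cmod (f x)" using l1 by (simp add: norm_mult)
    finally have r1: "Re (cnj (f \<zeta>) * f x) < 1" using fx by linarith
    have "- Re (cnj (f \<zeta>) * E) \<le> cmod (cnj (f \<zeta>) * E)" using abs_Re_le_cmod[of "cnj (f \<zeta>) * E"] by linarith
    also have "\<dots> = cmod E" using l1 by (simp add: norm_mult)
    finally have r2: "- Re (cnj (f \<zeta>) * E) \<le> cmod E" .
    show "Re (cnj (f \<zeta>) * deriv f \<zeta> * \<zeta> * \<omega>) < \<epsilon> * cmod \<omega>" using E eq r1 r2 by linarith
  qed
qed

lemma kappa:
  fixes f :: "complex \<Rightarrow> complex"
  assumes hol: "f holomorphic_on S" "open S" "\<zeta> \<in> S" and z1: "cmod \<zeta> = 1" and l1: "cmod (f \<zeta>) = 1"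
    and inside: "\<And>z. z \<in> ball 0 1 \<Longrightarrow> z \<in> S \<Longrightarrow> cmod (f z) < 1"
  shows "Re (cnj (f \<zeta>) * deriv f \<zeta> * \<zeta>) \<ge> 0" "Im (cnj (f \<zeta>) * deriv f \<zeta> * \<zeta>) = 0"
proof -
  define K where "K = cnj (f \<zeta>) * deriv f \<zeta> * \<zeta>"
  have aux: "\<exists>r>0. \<forall>\<omega>. cmod \<omega> < r \<longrightarrow> cmod (1 + \<omega>) < 1 \<longrightarrow> Re (K * \<omega>) < \<epsilon> * cmod \<omega>"
    if "\<epsilon> > 0" for \<epsilon>
    unfolding K_def by (rule kappa_aux[OF hol z1 l1]) (use inside that in auto)
  have re: "- Re K < \<epsilon>" if e: "\<epsilon> > 0" for \<epsilon>
  proof -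
    obtain r where r: "r > 0" "\<And>\<omega>. cmod \<omega> < r \<Longrightarrow> cmod (1 + \<omega>) < 1 \<Longrightarrow> Re (K * \<omega>) < \<epsilon> * cmod \<omega>"
      using aux[OF e] by blast
    define h where "h = min (r/2) 1"
    have h: "h > 0" "h < r" "h \<le> 1" using r(1) by (auto simp: h_def)
    have "1 + complex_of_real (-h) = complex_of_real (1-h)" by simp
    then have n1: "cmod (1 + complex_of_real (-h)) < 1" using h by (simp only: norm_of_real)
    have "Re (K * complex_of_real (-h)) < \<epsilon> * cmod (complex_of_real (-h))"
      using h n1 by (intro r(2)) (auto simp: norm_of_real)
    then have "h * (- Re K) < h * \<epsilon>" using h by (simp add: mult.commute)
    then have "h * (- Re K) < h * \<epsilon>" by simp
    then show ?thesis using h(1) mult_less_cancel_left_pos by blast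
  qed
  show "Re K \<ge> 0"
  proof (rule ccontr)
    assume "\<not> Re K \<ge> 0"
    then show False using re[of "- Re K"] by linarith
  qed
  have im: "- s * Im K < 3 * \<epsilon>" if e: "\<epsilon> > 0" and s: "s = 1 \<or> s = -1" for \<epsilon> s :: real
  proof -
    obtain r where r: "r > 0" "\<And>\<omega>. cmod \<omega> < r \<Longrightarrow> cmod (1 + \<omega>) < 1 \<Longrightarrow> Re (K * \<omega>) < \<epsilon> * cmod \<omega>"
      using aux[OF e] by blast
    define h where "h = min (min (r/3) (1/2)) (\<epsilon> / (\<bar>Re K\<bar> + 1))"
    have h0: "h \<le> min (r/3) (1/2)" unfolding h_def by (rule min.cobounded1)
    have h3: "h \<le> \<epsilon> / (\<bar>Re K\<bar> + 1)" unfolding h_def by (rule min.cobounded2)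
    have h: "h > 0" "h \<le> r/3" "h \<le> 1/2" "h \<le> \<epsilon> / (\<bar>Re K\<bar> + 1)" using r(1) e h0 h3 by (auto simp: h_def)
    have s2: "s^2 = 1" using s by auto
    define \<omega> where "\<omega> = Complex (- (h^2)) (s * h)"
    have n\<omega>: "cmod \<omega> \<le> 2 * h"
    proof -
      have "cmod \<omega> = sqrt (h^4 + h^2)" using s2 by (simp add: \<omega>_def cmod_def power_mult_distrib)
      also have "\<dots> \<le> sqrt ((2*h)^2)"
      proof (rule real_sqrt_le_mono)
        have hh: "h^2 \<le> 1" using h by (simp add: power_le_one)
        have "h^2*h^2 \<le> h^2*1" using hh by (intro mult_left_mono) auto
        then have "h^2*h^2 \<le> h^2" by simp
        moreover have "h^2 \<ge> 0" by simp
        moreover have "h^4 = h^2*h^2" by (simp add: power2_eq_square power4_eq_xxxx)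
        moreover have "(2*h)^2 = 4*h^2" by (simp add: power2_eq_square)
        ultimately show "h^4 + h^2 \<le> (2*h)^2" by linarith
      qed
      also have "\<dots> = \<bar>2 * h\<bar>" by (rule real_sqrt_abs)
      also have "\<dots> = 2 * h" using h by simp
      finally show ?thesis .
    qed
    have "cmod (1 + \<omega>) = sqrt ((1 - h^2)^2 + h^2)" using s2 by (simp add: \<omega>_def cmod_def power_mult_distrib)
    also have "\<dots> < 1"
    proof -
      have "h^2 * h^2 < h^2 * 1" using h by (intro mult_strict_left_mono) (auto simp: power_less_one_iff)
      then have "(1 - h^2)^2 + h^2 < 1" by (simp add: power2_eq_square algebra_simps)
      then show ?thesis by simp
    qed
    finally have "Re (K * \<omega>) < \<epsilon> * cmod \<omega>" using r(2) n\<omega> h by (intro r(2)) auto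
    also have "\<dots> \<le> \<epsilon> * (2 * h)" using n\<omega> e by simp
    finally have "h * (- Re K * h - s * Im K) < h * (2 * \<epsilon>)" by (simp add: \<omega>_def algebra_simps power2_eq_square)
    then have 1: "- Re K * h - s * Im K < 2 * \<epsilon>" using h by simp
    have "\<bar>Re K\<bar> * h \<le> \<bar>Re K\<bar> * (\<epsilon> / (\<bar>Re K\<bar> + 1))" using h by (intro mult_left_mono) auto
    also have "\<dots> \<le> \<epsilon>" using e by (simp add: field_simps)
    finally have "\<bar>Re K\<bar> * h \<le> \<epsilon>" .
    moreover have "- Re K * h \<ge> - (\<bar>Re K\<bar> * h)" using h by (simp add: abs_if)
    ultimately show ?thesis using 1 by linarith
  qed
  show "Im K = 0"
  proof (rule ccontr)
    assume nz: "Im K \<noteq> 0"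
    show False
    proof (cases "Im K > 0")
      case True
      then show False using im[of "Im K / 3" "-1"] by simp
    next
      case False
      then show False using im[of "- Im K / 3" "1"] nz by simp
    qed
  qed
qed

lemma inv_le_div: "0 < (K::real) \<Longrightarrow> 0 < y \<Longrightarrow> y \<le> K * X \<Longrightarrow> 1/K \<le> X / y"
  by (simp add: field_simps)

lemma div_le_c: "0 < (y::real) \<Longrightarrow> X \<le> C * y \<Longrightarrow> X / y \<le> C"
  by (simp add: divide_le_eq)

lemma core:
  fixes s \<zeta> l fv fu D u v :: complex and A B L c \<epsilon> kr :: real and n :: nat
  assumes z1: "cmod \<zeta> = 1" and l1: "cmod l = 1" and s: "1/2 < cmod s" "cmod s < 1" and fu1: "cmod fu = 1"
    and vdef: "v = s / complex_of_real (cmod s)" and udef: "u = s / complex_of_real ((cmod s)^2)"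
    and lin: "cmod (fu - fv - D * (u - v)) \<le> \<epsilon> * cmod (u - v)"
    and Lip: "cmod (fu - fv) \<le> L * cmod (u - v)"
    and anti: "c * cmod (v - \<zeta>) \<le> cmod (fv - l)" and Lip2: "cmod (fv - l) \<le> L * cmod (v - \<zeta>)"
    and Q1: "A * (cmod (l - fv))^n \<le> 1 - (cmod fv)^2" and Q2: "1 - (cmod fv)^2 \<le> B * (cmod (l - fv))^n"
    and kr: "Re (cnj l * D * \<zeta>) = kr" "kr > 0" "\<epsilon> \<le> kr / 4"
    and small: "cmod D * (L + 1) * cmod (v - \<zeta>) \<le> kr / 4"
    and pos: "A > 0" "B > 0" "L > 0" "c > 0" "n \<ge> 1"
  shows "1 / (2^(n+1) * (1 + 2*L/(A*c^n))) \<le> (1 - (cmod s)^2) / (cmod (\<zeta> - s)) powr real n"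
    and "(1 - (cmod s)^2) / (cmod (\<zeta> - s)) powr real n \<le> 4 * B * L^n * 2^n / kr"
proof -
  define m where "m = cmod s"
  define t where "t = 1/m - 1"
  define a where "a = cmod (v - \<zeta>)"
  define d where "d = cmod (\<zeta> - s)"
  have m: "1/2 < m" "m < 1" using s by (auto simp: m_def)
  have t: "0 < t" "t \<le> 1" "1 - m = m * t" using m by (auto simp: t_def field_simps)
  have s0: "s \<noteq> 0" using s(1) by auto
  have ms0: "complex_of_real (cmod s) \<noteq> 0" using s0 by simp
  have v1: "cmod v = 1" using s0 by (simp add: vdef norm_divide)
  have uv: "u - v = complex_of_real t * v"
    using ms0 by (simp add: udef vdef t_def m_def field_simps power2_eq_square)
  have nuv: "cmod (u - v) = t"
  proof -
    have "cmod (u - v) = \<bar>t\<bar>" by (simp only: uv norm_mult norm_of_real v1 mult_1_right)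
    then show ?thesis using t by simp
  qed
  have vs: "v - s = complex_of_real (1 - m) * v"
    using ms0 by (simp add: vdef m_def field_simps)
  have nvs: "cmod (v - s) = 1 - m"
  proof -
    have "cmod (v - s) = \<bar>1 - m\<bar>" by (simp only: vs norm_mult norm_of_real v1 mult_1_right)
    then show ?thesis using m by simp
  qed
  have dm: "1 - m \<le> d"
    using norm_triangle_ineq2[of \<zeta> s] z1 by (simp add: d_def m_def)
  have ad: "a \<le> 2 * d"
  proof -
    have "a \<le> cmod (v - s) + cmod (s - \<zeta>)" unfolding a_def using norm_triangle_ineq[of "v-s" "s-\<zeta>"] by simp
    then show ?thesis using nvs dm by (simp add: d_def norm_minus_commute)
  qed
  have da: "d \<le> a + t"
  proof -
    have "d \<le> cmod (\<zeta> - v) + cmod (v - s)" unfolding d_def using norm_triangle_ineq[of "\<zeta>-v" "v-s"] by simp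
    moreover have "m * t \<le> t" using m t by (intro mult_left_le_one_le) auto
    moreover have "cmod (\<zeta> - v) = a" unfolding a_def by (rule norm_minus_commute)
    ultimately show ?thesis using nvs t(3) by linarith
  qed
  have a0: "0 \<le> a" by (simp add: a_def)
  have d0: "d > 0" using dm m by linarith
  have fv1: "cmod fv \<le> 1"
  proof -
    have "0 \<le> A * (cmod (l - fv))^n" using pos by simp
    then have "(cmod fv)^2 \<le> 1^2" using Q1 by simp
    then show ?thesis by (rule power2_le_imp_le) simp
  qed
  have q2: "1 - (cmod fv)^2 \<le> 2 * (1 - cmod fv)"
  proof -
    have "1 - (cmod fv)^2 = (1 - cmod fv) * (1 + cmod fv)" by (simp add: algebra_simps power2_eq_square)
    also have "\<dots> \<le> (1 - cmod fv) * 2" using fv1 by (intro mult_left_mono) auto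
    finally show ?thesis by simp
  qed
  have q3: "1 - cmod fv \<le> 1 - (cmod fv)^2"
  proof -
    have "cmod fv * cmod fv \<le> 1 * cmod fv" using fv1 by (intro mult_right_mono) auto
    then have "(cmod fv)^2 \<le> cmod fv" by (simp add: power2_eq_square)
    then show ?thesis by simp
  qed
  have lf: "cmod (l - fv) = cmod (fv - l)" by (rule norm_minus_commute)
  have sm: "1 - m\<^sup>2 = (1 - m) * (1 + m)" by (simp add: algebra_simps power2_eq_square)
  have s1: "t / 2 \<le> 1 - m^2"
  proof -
    have "t/2 \<le> m * t" using m t by simp
    also have "\<dots> \<le> (1 - m) * (1 + m)" using t m by simp
    finally show ?thesis using sm by simp
  qed
  have s2: "1 - m^2 \<le> 2 * t"
  proof -
    have "(1 - m) * (1 + m) \<le> (1 - m) * 2" using m by (intro mult_left_mono) auto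
    also have "\<dots> = 2 * m * t" using t by simp
    also have "\<dots> \<le> 2 * t" using m t by simp
    finally show ?thesis using sm by simp
  qed
  have pw: "d powr real n = d^n" using d0 by (simp add: powr_realpow)
  have low1: "1 - cmod fv \<le> L * t"
    using norm_triangle_ineq2[of fu fv] fu1 Lip nuv by simp
  have "A * (c * a)^n \<le> A * (cmod (l - fv))^n"
    using anti pos lf by (intro mult_left_mono power_mono) (auto simp: a_def)
  also have "\<dots> \<le> 2 * L * t"
  proof -
    have "2 * (1 - cmod fv) \<le> 2 * (L * t)" using low1 by simp
    then show ?thesis using Q1 q2 by (simp add: mult.assoc)
  qed
  finally have an: "a^n \<le> 2 * L / (A * c^n) * t"
    using pos by (simp add: field_simps power_mult_distrib)
  have tn: "t^n \<le> t" using t pos by (simp add: power_le_one_iff power_decreasing[of 1 n t, simplified])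
  have "d^n \<le> (a + t)^n" using da d0 by (intro power_mono) auto
  also have "\<dots> \<le> (2 * max a t)^n" using a0 t(1) by (intro power_mono) auto
  also have "\<dots> = 2^n * (max a t)^n" by (simp add: power_mult_distrib)
  also have "\<dots> \<le> 2^n * (a^n + t^n)"
  proof -
    have "(max a t)^n \<le> a^n + t^n"
    proof -
      have "0 \<le> t^n" "0 \<le> a^n" using t(1) a0 by auto
      then show ?thesis by (cases "a \<le> t") (auto simp: max_def)
    qed
    then show ?thesis by simp
  qed
  also have "\<dots> \<le> 2^n * (2 * L / (A * c^n) * t + t)" using an tn by simp
  also have "\<dots> = 2^n * (1 + 2 * L / (A * c^n)) * t" by (simp add: algebra_simps)
  also have "\<dots> \<le> 2^n * (1 + 2 * L / (A * c^n)) * (2 * (1 - m^2))"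
    using s1 pos by (intro mult_left_mono) auto
  also have "\<dots> = 2^(n+1) * (1 + 2 * L / (A * c^n)) * (1 - m^2)" by simp
  finally have low: "d^n \<le> 2^(n+1) * (1 + 2 * L / (A * c^n)) * (1 - m^2)" .
  have K0: "0 < 2^(n+1) * (1 + 2 * L / (A * c^n))" using pos by (simp add: add_pos_nonneg)
  show "1 / (2^(n+1) * (1 + 2*L/(A*c^n))) \<le> (1 - (cmod s)^2) / (cmod (\<zeta> - s)) powr real n"
    unfolding pw m_def[symmetric] d_def[symmetric]
    by (rule inv_le_div[OF K0 _ low]) (use d0 in simp)
  define E where "E = fu - fv - D * (u - v)"
  have nE: "cmod E \<le> \<epsilon> * t" using lin nuv by (simp add: E_def)
  have "Re (cnj fv * fu) \<le> cmod fv" using complex_Re_le_cmod[of "cnj fv * fu"] fu1 by (simp add: norm_mult)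
  moreover have "Re (cnj fv * fv) = (cmod fv)^2" using complex_norm_square[of fv]
    by (metis Re_complex_of_real mult.commute)
  moreover have "cmod fv * (1 - cmod fv) \<le> 1 * (1 - cmod fv)" using fv1 by (intro mult_right_mono) auto
  ultimately have u1: "Re (cnj fv * (fu - fv)) \<le> 1 - cmod fv"
    by (simp add: right_diff_distrib power2_eq_square algebra_simps)
  have fufv: "fu - fv = complex_of_real t * (D * v) + E" by (simp add: E_def uv algebra_simps)
  have "Re (cnj fv * (fu - fv)) = t * Re (cnj fv * D * v) + Re (cnj fv * E)"
  proof -
    have "cnj fv * (fu - fv) = complex_of_real t * (cnj fv * D * v) + cnj fv * E" by (simp add: fufv algebra_simps)
    then show ?thesis by simp
  qed
  moreover have "- Re (cnj fv * E) \<le> \<epsilon> * t"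
  proof -
    have "- Re (cnj fv * E) \<le> cmod (cnj fv * E)" using abs_Re_le_cmod[of "cnj fv * E"] by linarith
    also have "\<dots> \<le> 1 * (\<epsilon> * t)" unfolding norm_mult complex_mod_cnj
      using fv1 nE by (intro mult_mono) auto
    finally show ?thesis by simp
  qed
  moreover have "Re (cnj fv * D * v) \<ge> 3/4 * kr"
  proof -
    have eq: "cnj fv * D * v - cnj l * D * \<zeta> = D * v * cnj (fv - l) + cnj l * D * (v - \<zeta>)"
      by (simp add: algebra_simps)
    have "cmod (cnj fv * D * v - cnj l * D * \<zeta>) \<le> cmod D * cmod (fv - l) + cmod D * a"
      unfolding eq using norm_triangle_ineq[of "D * v * cnj (fv - l)" "cnj l * D * (v - \<zeta>)"] complex_mod_cnj[of "fv - l"]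
      by (simp add: norm_mult v1 l1 a_def)
    also have "\<dots> \<le> cmod D * (L * a) + cmod D * a" using Lip2 by (intro add_right_mono mult_left_mono) (auto simp: a_def)
    also have "\<dots> = cmod D * (L + 1) * a" by (simp add: algebra_simps)
    also have "\<dots> \<le> kr / 4" using small by (simp add: a_def)
    finally have "cmod (cnj fv * D * v - cnj l * D * \<zeta>) \<le> kr / 4" .
    moreover have "Re (cnj l * D * \<zeta>) - Re (cnj fv * D * v) \<le> cmod (cnj fv * D * v - cnj l * D * \<zeta>)"
      using abs_Re_le_cmod[of "cnj fv * D * v - cnj l * D * \<zeta>"] by simp
    ultimately show ?thesis using kr by linarith
  qed
  ultimately have "t * (3/4 * kr) - \<epsilon> * t \<le> 1 - cmod fv"
    using u1 t mult_left_mono[of "3/4*kr" "Re (cnj fv * D * v)" t] by linarith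
  moreover have "\<epsilon> * t \<le> kr / 4 * t" using kr t by (intro mult_right_mono) auto
  ultimately have up1: "t * kr / 2 \<le> 1 - cmod fv" by (simp add: algebra_simps)
  have "cmod (l - fv)^n \<le> (L * a)^n" using Lip2 lf by (intro power_mono) (auto simp: a_def)
  also have "\<dots> \<le> (L * (2 * d))^n" using ad pos by (intro power_mono mult_left_mono) (auto simp: a_def)
  finally have "cmod (l - fv)^n \<le> L^n * 2^n * d^n" by (simp add: power_mult_distrib)
  then have "t * kr / 2 \<le> B * (L^n * 2^n * d^n)" using up1 q3 Q2 pos mult_left_mono[of _ _ B] by (smt (verit))
  define X where "X = B * (L^n * 2^n * d^n)"
  have tX: "t * kr \<le> 2 * X" using \<open>t * kr / 2 \<le> B * (L^n * 2^n * d^n)\<close> by (simp add: X_def)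
  have "t \<le> 2 * X / kr" using tX kr(2) by (simp add: pos_le_divide_eq)
  then have "1 - m^2 \<le> 2 * (2 * X / kr)" using s2 by linarith
  also have "2 * (2 * X / kr) = 4 * B * L^n * 2^n / kr * d^n" by (simp add: X_def)
  finally have up: "1 - m^2 \<le> 4 * B * L^n * 2^n / kr * d^n" .
  show "(1 - (cmod s)^2) / (cmod (\<zeta> - s)) powr real n \<le> 4 * B * L^n * 2^n / kr"
    unfolding pw m_def[symmetric] d_def[symmetric] by (rule div_le_c) (use d0 up in simp_all)
qed

lemma rho_rho[simp]: "rho (rho z) = z" by (simp add: rho_def)
lemma norm_rho: "cmod (rho z) = 1 / cmod z" by (simp add: rho_def norm_divide)
lemma rho_circle: "cmod z = 1 \<Longrightarrow> rho z = z"
proof -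
  assume z: "cmod z = 1"
  have "z * cnj z = 1" using complex_norm_square[of z] z by simp
  then show "rho z = z" unfolding rho_def using z by (simp add: divide_eq_eq mult.commute)
qed
lemma rho_diff: "a \<noteq> 0 \<Longrightarrow> b \<noteq> 0 \<Longrightarrow> cmod (rho a - rho b) = cmod (a - b) / (cmod a * cmod b)"
proof -
  assume a: "a \<noteq> 0" and b: "b \<noteq> 0"
  have "rho a - rho b = cnj (b - a) / (cnj a * cnj b)" using a b by (simp add: rho_def field_simps)
  then have "cmod (rho a - rho b) = cmod (cnj (b - a)) / (cmod (cnj a) * cmod (cnj b))"
    by (simp only: norm_divide norm_mult)
  also have "\<dots> = cmod (a - b) / (cmod a * cmod b)"
    by (simp only: complex_mod_cnj norm_minus_commute[of b a])
  finally show ?thesis .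
qed

lemma poly_facts:
  fixes p q :: "complex poly"
  assumes sm: "rational_selfmap p q"
  shows "\<And>z. z \<in> cball 0 1 \<Longrightarrow> cmod (poly p z) \<le> cmod (poly q z)"
    and "\<And>z. z \<in> cball 0 1 \<Longrightarrow> poly q z \<noteq> 0"
proof -
  have cop: "coprime p q" and qz: "\<And>z. z \<in> ball 0 1 \<Longrightarrow> poly q z \<noteq> 0"
    and fz: "\<And>z. z \<in> ball 0 1 \<Longrightarrow> cmod (rat_fun p q z) < 1"
    using sm by (auto simp: rational_selfmap_def)
  have sub: "ball 0 1 \<subseteq> {z. cmod (poly p z) \<le> cmod (poly q z)}"
  proof
    fix z :: complex assume z: "z \<in> ball 0 1"
    have "cmod (poly p z) / cmod (poly q z) < 1" using fz[OF z] by (simp add: rat_fun_def norm_divide)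
    then have "cmod (poly p z) < cmod (poly q z)" using qz[OF z] by (simp add: divide_less_eq)
    then show "z \<in> {z. cmod (poly p z) \<le> cmod (poly q z)}" by simp
  qed
  have cl: "closed {z. cmod (poly p z) \<le> cmod (poly q z)}"
    by (intro closed_Collect_le continuous_intros)
  have "cball 0 1 \<subseteq> {z. cmod (poly p z) \<le> cmod (poly q z)}"
    using closure_minimal[OF sub cl] by (simp add: closure_ball)
  then show le: "\<And>z. z \<in> cball 0 1 \<Longrightarrow> cmod (poly p z) \<le> cmod (poly q z)" by blast
  show "poly q z \<noteq> 0" if z: "z \<in> cball 0 1" for z
  proof
    assume q0: "poly q z = 0"
    then have "poly p z = 0" using le[OF z] by simp
    then have "[:-z, 1:] dvd p" "[:-z, 1:] dvd q" using q0 by (simp_all add: poly_eq_0_iff_dvd)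
    then have "is_unit [:-z, 1:]" using cop coprime_common_divisor by blast
    moreover have "degree [:-z, 1:] = 1" by simp
    ultimately show False using is_unit_iff_degree[of "[:-z, 1:]"] by simp
  qed
qed

lemma deriv_nz:
  fixes f \<sigma> :: "complex \<Rightarrow> complex"
  assumes hol: "f holomorphic_on S" "open S" "\<zeta> \<in> S" and z1: "cmod \<zeta> = 1" and l1: "cmod (f \<zeta>) = 1"
    and sh: "\<sigma> holomorphic_on U" "open U" "f \<zeta> \<in> U" and sl: "\<sigma> (f \<zeta>) = \<zeta>"
    and inv: "\<And>w. w \<in> U \<Longrightarrow> f (rho (\<sigma> w)) = rho w"
  shows "deriv f \<zeta> \<noteq> 0"
proof
  assume D0: "deriv f \<zeta> = 0"
  define l where "l = f \<zeta>"
  have l1': "cmod l = 1" using l1 by (simp add: l_def)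
  obtain r1 where r1: "r1>0" "ball l r1 \<subseteq> U"
    "\<And>x y. x\<in>ball l r1 \<Longrightarrow> y \<in> ball l r1 \<Longrightarrow> cmod (\<sigma> x - \<sigma> y - deriv \<sigma> l * (x-y)) \<le> 1 * cmod (x-y)"
    using lin[OF sh, of 1] unfolding l_def by auto
  define M where "M = cmod (deriv \<sigma> l) + 1"
  have M: "M \<ge> 1" by (simp add: M_def)
  have sM: "cmod (\<sigma> w - \<zeta>) \<le> M * cmod (w - l)" if w: "w \<in> ball l r1" for w
  proof -
    have sl': "\<sigma> l = \<zeta>" using sl by (simp add: l_def)
    have a1: "cmod (\<sigma> w - \<zeta> - deriv \<sigma> l * (w - l)) \<le> cmod (w - l)"
      using r1(3)[OF w, of l] r1(1) sl' by simp
    have a2: "cmod (\<sigma> w - \<zeta>) \<le> cmod (\<sigma> w - \<zeta> - deriv \<sigma> l * (w - l)) + cmod (deriv \<sigma> l) * cmod (w - l)"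
      using norm_triangle_ineq[of "\<sigma> w - \<zeta> - deriv \<sigma> l * (w - l)" "deriv \<sigma> l * (w - l)"] by (simp add: norm_mult)
    have "M * cmod (w-l) = cmod (w-l) + cmod (deriv \<sigma> l) * cmod (w-l)" by (simp add: M_def algebra_simps)
    then show ?thesis using a1 a2 by linarith
  qed
  have e: "1/(64*M) > 0" using M by simp
  obtain r2 where r2: "r2>0" "ball \<zeta> r2 \<subseteq> S"
    "\<And>x y. x\<in>ball \<zeta> r2 \<Longrightarrow> y \<in> ball \<zeta> r2 \<Longrightarrow> cmod (f x - f y - deriv f \<zeta> * (x-y)) \<le> 1/(64*M) * cmod (x-y)"
    using lin[OF hol e] by auto
  define h where "h = min (min r1 (r2/(4*M))) (1/(8*M)) / 2"
  have h: "h > 0" "h < r1" "2*M*h < r2" "M*h \<le> 1/8" "h \<le> 1"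
  proof -
    have a: "min (min r1 (r2/(4*M))) (1/(8*M)) \<le> r1" "min (min r1 (r2/(4*M))) (1/(8*M)) \<le> r2/(4*M)"
      "min (min r1 (r2/(4*M))) (1/(8*M)) \<le> 1/(8*M)" by auto
    have b: "min (min r1 (r2/(4*M))) (1/(8*M)) > 0" using r1 r2 M by auto
    show "h > 0" "h < r1" using a b by (auto simp: h_def)
    have hh: "h \<le> r2/(8*M)" "h \<le> 1/(16*M)" using a b by (auto simp: h_def)
    have c1: "M * h \<le> M * (r2/(8*M))" using hh(1) M by (intro mult_left_mono) auto
    have c2: "M * h \<le> M * (1/(16*M))" using hh(2) M by (intro mult_left_mono) auto
    have "M * (r2/(8*M)) = r2/8" "M * (1/(16*M)) = 1/16" using M by auto
    then have "M * h \<le> r2/8" "M * h \<le> 1/16" using c1 c2 by auto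
    then show "2*M*h < r2" "M*h \<le> 1/8" using M r2 by auto
    have "1 * h \<le> M * h" using M \<open>h > 0\<close> by (intro mult_right_mono) auto
    then show "h \<le> 1" using \<open>M * h \<le> 1/8\<close> by simp
  qed
  define w where "w = l * (1 + complex_of_real h)"
  have wl: "w - l = l * complex_of_real h" by (simp add: w_def algebra_simps)
  have nwl: "cmod (w - l) = h" using h l1' by (simp add: wl norm_mult)
  have nw: "cmod w = 1 + h"
  proof -
    have "1 + complex_of_real h = complex_of_real (1 + h)" by simp
    then have "cmod w = cmod l * \<bar>1 + h\<bar>" by (simp only: w_def norm_mult norm_of_real)
    then show ?thesis using h l1' by simp
  qed
  have wb: "w \<in> ball l r1" using nwl h by (simp add: dist_norm norm_minus_commute)
  define s where "s = \<sigma> w"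
  have s\<zeta>: "cmod (s - \<zeta>) \<le> M * h" using sM[OF wb] nwl by (simp add: s_def)
  have sn: "cmod s \<ge> 7/8"
    using norm_triangle_ineq2[of \<zeta> s] z1 s\<zeta> h norm_minus_commute[of s \<zeta>] by linarith
  have s0: "s \<noteq> 0" using sn by auto
  define x where "x = rho s"
  have "cmod (x - \<zeta>) = cmod (rho s - rho \<zeta>)" using rho_circle[OF z1] by (simp add: x_def)
  also have "\<dots> = cmod (s - \<zeta>) / cmod s" using rho_diff[OF s0, of \<zeta>] z1 by (cases "\<zeta> = 0") auto
  also have "\<dots> \<le> (M * h) / (7/8)" using s\<zeta> sn M h(1) by (intro frac_le) auto
  finally have x\<zeta>: "cmod (x - \<zeta>) \<le> 8/7 * (M * h)" by simp
  have "cmod (x-\<zeta>) < r2"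
  proof -
    have "8/7*(M*h) \<le> 2*(M*h)" using M h(1) by simp
    moreover have "2*(M*h) < r2" using h(3) by (simp add: mult.assoc)
    ultimately show ?thesis using x\<zeta> by linarith
  qed
  then have xb: "x \<in> ball \<zeta> r2" using dist_commute[of \<zeta> x] by (simp add: dist_norm)
  have fx: "f x = rho w" using inv wb r1(2) by (auto simp: x_def s_def)
  have "cmod (f x - l) \<le> 1/(64*M) * cmod (x - \<zeta>)" using r2(3)[OF xb, of \<zeta>] r2(1) D0 by (simp add: l_def)
  also have "\<dots> \<le> 1/(64*M) * (8/7 * (M * h))" using x\<zeta> e by (intro mult_left_mono) auto
  also have "\<dots> = h / 56" using M by (simp add: field_simps)
  finally have up: "cmod (f x - l) \<le> h / 56" .
  have w0: "w \<noteq> 0" using nw h by auto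
  have l0: "l \<noteq> 0" using l1' by auto
  have "cmod (f x - l) = cmod (rho w - rho l)" using rho_circle[OF l1'] fx by simp
  also have "\<dots> = h / (1 + h)" using rho_diff[OF w0 l0] nwl nw l1' by simp
  finally have "h / (1 + h) \<le> h / 56" using up by simp
  then show False using h by (simp add: field_simps)
qed

lemma ae_ext:
  fixes f :: "complex \<Rightarrow> complex" and \<zeta> l v :: complex
  assumes cont: "continuous_on S f" "open S"
    and ae: "AE \<theta> in lborel. dist (cis \<theta>) \<zeta> < \<delta> \<longrightarrow>
           A \<le> (1 - (norm (f (cis \<theta>)))\<^sup>2) / (norm (l - f (cis \<theta>))) powr c \<and>
           (1 - (norm (f (cis \<theta>)))\<^sup>2) / (norm (l - f (cis \<theta>))) powr c \<le> B"
    and v: "cmod v = 1" "dist v \<zeta> < \<delta>" "v \<in> S" "f v \<noteq> l"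
  shows "A \<le> (1 - (cmod (f v))\<^sup>2) / (cmod (l - f v)) powr c \<and>
         (1 - (cmod (f v))\<^sup>2) / (cmod (l - f v)) powr c \<le> B"
proof (rule ccontr)
  define R where "R = (\<lambda>\<theta>. (1 - (norm (f (cis \<theta>)))\<^sup>2) / (norm (l - f (cis \<theta>))) powr c)"
  define P where "P = (\<lambda>\<theta>. dist (cis \<theta>) \<zeta> < \<delta> \<longrightarrow> A \<le> R \<theta> \<and> R \<theta> \<le> B)"
  assume nb: "\<not> ?thesis"
  define \<theta>0 where "\<theta>0 = Arg v"
  have v0: "v \<noteq> 0" using v by auto
  have c0: "cis \<theta>0 = v" using cis_Arg[OF v0] v(1) by (simp add: \<theta>0_def sgn_div_norm)
  have fc: "isCont f v" using cont v(3) continuous_on_eq_continuous_at by blast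
  have "continuous_on UNIV cis" by (intro continuous_intros)
  then have cc: "isCont cis \<theta>0" using continuous_on_eq_continuous_at[OF open_UNIV] by blast
  have gc: "isCont (\<lambda>\<theta>. f (cis \<theta>)) \<theta>0"
    using isCont_o2[OF cc] fc c0 by simp
  have ne: "norm (l - f (cis \<theta>0)) \<noteq> 0" using v(4) c0 by auto
  have g1: "isCont (\<lambda>\<theta>. 1 - (norm (f (cis \<theta>)))\<^sup>2) \<theta>0"
    by (intro continuous_diff continuous_const continuous_power continuous_norm gc)
  have g2: "isCont (\<lambda>\<theta>. norm (l - f (cis \<theta>))) \<theta>0"
    by (intro continuous_diff continuous_const continuous_norm gc)
  have g3: "isCont (\<lambda>\<theta>. (norm (l - f (cis \<theta>))) powr c) \<theta>0"
    by (rule continuous_at_within_powr[OF g2 continuous_const ne])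
  have Rc: "isCont R \<theta>0" unfolding R_def
    by (rule continuous_divide[OF g1 g3]) (use ne in simp)
  have dc: "isCont (\<lambda>\<theta>. dist (cis \<theta>) \<zeta>) \<theta>0" by (intro continuous_dist cc continuous_const)
  have Rlim: "(R \<longlongrightarrow> R \<theta>0) (at \<theta>0)" using Rc isCont_def by blast
  have dlim: "((\<lambda>\<theta>. dist (cis \<theta>) \<zeta>) \<longlongrightarrow> dist (cis \<theta>0) \<zeta>) (at \<theta>0)" using dc isCont_def by blast
  have ev1: "eventually (\<lambda>\<theta>. dist (cis \<theta>) \<zeta> < \<delta>) (at \<theta>0)"
    using order_tendstoD(2)[OF dlim] v(2) c0 by simp
  have nR: "R \<theta>0 < A \<or> R \<theta>0 > B" using nb c0 by (auto simp: R_def)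
  have ev2: "eventually (\<lambda>\<theta>. R \<theta> < A \<or> R \<theta> > B) (at \<theta>0)"
  proof (cases "R \<theta>0 < A")
    case True then show ?thesis using order_tendstoD(2)[OF Rlim True] by (auto elim: eventually_mono)
  next
    case False then have "R \<theta>0 > B" using nR by auto
    then show ?thesis using order_tendstoD(1)[OF Rlim \<open>R \<theta>0 > B\<close>] by (auto elim: eventually_mono)
  qed
  have "eventually (\<lambda>\<theta>. \<not> P \<theta>) (at \<theta>0)"
    using eventually_conj[OF ev1 ev2] by (auto simp: P_def elim: eventually_mono)
  then obtain d where d: "d > 0" "\<And>x. x \<noteq> \<theta>0 \<Longrightarrow> dist x \<theta>0 < d \<Longrightarrow> \<not> P x"
    unfolding eventually_at by auto
  have P0: "\<not> P \<theta>0" using nR v(2) c0 by (auto simp: P_def)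
  have sub: "{\<theta>0 - d <..< \<theta>0 + d} \<subseteq> {x. \<not> P x}"
  proof
    fix x assume "x \<in> {\<theta>0 - d <..< \<theta>0 + d}"
    then have "dist x \<theta>0 < d" by (auto simp: dist_real_def)
    then show "x \<in> {x. \<not> P x}" using d(2)[of x] P0 by (cases "x = \<theta>0") auto
  qed
  have "AE \<theta> in lborel. P \<theta>" using ae by (simp add: P_def R_def)
  then obtain N where N: "{x \<in> space lborel. \<not> P x} \<subseteq> N" "emeasure lborel N = 0" "N \<in> sets lborel"
    by (rule AE_E)
  have "{\<theta>0 - d <..< \<theta>0 + d} \<subseteq> N" using sub N(1) by auto
  then have "emeasure lborel {\<theta>0 - d <..< \<theta>0 + d} \<le> emeasure lborel N" by (intro emeasure_mono N(3))
  then have "ennreal (2 * d) \<le> 0" using N(2) d(1) by simp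
  then show False using d(1) by (simp add: ennreal_le_iff2) 
qed

lemma cancel4: "(K::real) > 0 \<Longrightarrow> K * (x / (4 * K)) = x / 4" by simp

lemma circle_pt:
  assumes z1: "cmod \<zeta> = 1" and e: "\<eta> > 0"
  shows "\<exists>v. cmod v = 1 \<and> v \<noteq> \<zeta> \<and> cmod (v - \<zeta>) < \<eta>"
proof -
  have "continuous_on UNIV cis" by (intro continuous_intros)
  then have "isCont cis 0" using continuous_on_eq_continuous_at[OF open_UNIV] by blast
  then obtain d where d: "d > 0" "\<And>x. dist x 0 < d \<Longrightarrow> dist (cis x) (cis 0) < \<eta>"
    using e unfolding continuous_at_eps_delta by blast
  define h where "h = min d 1 / 2"
  have h: "0 < h" "h < d" "h < pi" using d pi_gt3 by (auto simp: h_def)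
  have ch: "cmod (cis h - 1) < \<eta>" using d(2)[of h] h by (simp add: dist_norm)
  have "sin h > 0" using h by (intro sin_gt_zero) auto
  then have ch1: "cis h \<noteq> 1"
  proof (intro notI)
    assume "cis h = 1"
    then have "Im (cis h) = 0" by simp
    then show False using \<open>sin h > 0\<close> by simp
  qed
  define v where "v = \<zeta> * cis h"
  have "v - \<zeta> = \<zeta> * (cis h - 1)" by (simp add: v_def algebra_simps)
  then have "cmod (v - \<zeta>) = cmod (cis h - 1)" using z1 by (simp add: norm_mult)
  moreover have "cmod v = 1" using z1 by (simp add: v_def norm_mult)
  moreover have "v \<noteq> \<zeta>" using ch1 z1 by (auto simp: v_def)
  ultimately show ?thesis using ch by (intro exI[of _ v]) simp
qed

lemma AE_cis_ne: "AE \<theta> in lborel. cis \<theta> \<noteq> l"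
proof (cases "\<exists>a. cis a = l")
  case False then show ?thesis by simp
next
  case True
  then obtain a where a: "cis a = l" by blast
  have "{\<theta>. cis \<theta> = l} \<subseteq> range (\<lambda>n::int. a + of_int n * 2 * pi)"
  proof
    fix \<theta> assume "\<theta> \<in> {\<theta>. cis \<theta> = l}"
    then have "cis (\<theta> - a) = 1" using a cis_divide[of \<theta> a] by (auto simp: cis_neq_zero)
    then have "Re (cis (\<theta> - a)) = 1" by simp
    then have "cos (\<theta> - a) = 1" by simp
    then obtain n :: int where "\<theta> - a = of_int n * 2 * pi" using cos_one_2pi_int by blast
    then show "\<theta> \<in> range (\<lambda>n::int. a + of_int n * 2 * pi)" by (intro image_eqI[of _ _ n]) auto
  qed
  then have "countable {\<theta>. cis \<theta> = l}" by (rule countable_subset) auto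
  then have "{\<theta>. cis \<theta> = l} \<in> null_sets lborel" by (rule countable_imp_null_set_lborel)
  then show ?thesis by (rule AE_not_in[THEN AE_mp]) auto
qed

theorem mainTheorem10:
  fixes p q :: "complex poly" and \<zeta> :: complex and n :: nat
    and \<sigma> :: "complex \<Rightarrow> complex" and U :: "complex set"
  assumes "rational_selfmap p q"
    and "even n"
    and "order_of_contact (rat_fun p q) \<zeta> (real n)"
    and "open U" and "rat_fun p q \<zeta> \<in> U"
    and "\<sigma> holomorphic_on U"
    and "\<sigma> (rat_fun p q \<zeta>) = \<zeta>"
    and "\<forall>w\<in>U. ext_map (rat_fun p q) (\<sigma> w) = w"
  shows "order_of_contact \<sigma> (rat_fun p q \<zeta>) (real n)"
proof -
  note sm = assms(1) and oc = assms(3) and Uo = assms(4) and sh = assms(6)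
  define \<phi> where "\<phi> = rat_fun p q"
  define l where "l = \<phi> \<zeta>"
  have lU: "l \<in> U" using assms(5) by (simp add: l_def \<phi>_def)
  have sl: "\<sigma> l = \<zeta>" using assms(7) by (simp add: l_def \<phi>_def)
  have z1: "cmod \<zeta> = 1" and l1: "cmod l = 1" using oc by (auto simp: order_of_contact_def l_def \<phi>_def)
  obtain \<delta>0 A B where AB: "\<delta>0 > 0" "A > 0" "B > 0"
    and ae: "AE \<theta> in lborel. dist (cis \<theta>) \<zeta> < \<delta>0 \<longrightarrow>
           A \<le> (1 - (norm (\<phi> (cis \<theta>)))\<^sup>2) / (norm (l - \<phi> (cis \<theta>))) powr (real n) \<and>
           (1 - (norm (\<phi> (cis \<theta>)))\<^sup>2) / (norm (l - \<phi> (cis \<theta>))) powr (real n) \<le> B"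
    using oc unfolding order_of_contact_def \<phi>_def[symmetric] l_def[symmetric] by blast
  define S where "S = {z. poly q z \<noteq> 0}"
  have So: "open S" unfolding S_def by (intro open_Collect_neq continuous_intros)
  have \<phi>eq: "\<phi> = (\<lambda>z. poly p z / poly q z)" by (simp add: \<phi>_def rat_fun_def fun_eq_iff)
  have hol: "\<phi> holomorphic_on S" unfolding \<phi>eq S_def
    by (intro holomorphic_on_divide poly_holomorphic_on holomorphic_on_id) auto
  have cS: "cball 0 1 \<subseteq> S" using poly_facts(2)[OF sm] by (auto simp: S_def)
  have \<zeta>S: "\<zeta> \<in> S" using cS z1 by auto
  have inside: "\<And>z. z \<in> ball 0 1 \<Longrightarrow> cmod (\<phi> z) < 1"
    using sm by (auto simp: rational_selfmap_def \<phi>_def)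
  have le1: "cmod (\<phi> z) \<le> 1" if "z \<in> cball 0 1" for z
  proof -
    have "cmod (poly p z) \<le> cmod (poly q z)" "poly q z \<noteq> 0" using poly_facts[OF sm] that by auto
    then show ?thesis by (simp add: \<phi>eq norm_divide divide_le_eq)
  qed
  have inv: "\<phi> (rho (\<sigma> w)) = rho w" if "w \<in> U" for w
  proof -
    have "rho (\<phi> (rho (\<sigma> w))) = w" using assms(8) that by (simp add: ext_map_def \<phi>_def)
    then have "rho (rho (\<phi> (rho (\<sigma> w)))) = rho w" by simp
    then show ?thesis by simp
  qed
  have l1': "cmod (\<phi> \<zeta>) = 1" using l1 by (simp add: l_def)
  have D0: "deriv \<phi> \<zeta> \<noteq> 0"
    by (rule deriv_nz[OF hol So \<zeta>S z1 l1' sh Uo]) (use lU sl inv in \<open>auto simp: l_def\<close>)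
  define D where "D = deriv \<phi> \<zeta>"
  have kap: "Re (cnj l * D * \<zeta>) \<ge> 0" "Im (cnj l * D * \<zeta>) = 0"
    using kappa[OF hol So \<zeta>S z1 l1'] inside unfolding D_def l_def by auto
  define kr where "kr = Re (cnj l * D * \<zeta>)"
  have "cnj l * D * \<zeta> \<noteq> 0" using D0 l1 z1 by (auto simp: D_def)
  then have kr: "kr > 0" using kap by (auto simp: kr_def complex_eq_iff)
  have D0': "cmod D > 0" using D0 by (simp add: D_def)
  define \<epsilon> where "\<epsilon> = min (cmod D / 2) (kr / 4)"
  have \<epsilon>: "\<epsilon> > 0" "\<epsilon> \<le> cmod D / 2" "\<epsilon> \<le> kr / 4" using D0' kr by (auto simp: \<epsilon>_def)
  obtain r where r: "r > 0" "ball \<zeta> r \<subseteq> S"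
    "\<And>x y. x\<in>ball \<zeta> r \<Longrightarrow> y\<in>ball \<zeta> r \<Longrightarrow> cmod (\<phi> x - \<phi> y - D * (x - y)) \<le> \<epsilon> * cmod (x - y)"
    using lin[OF hol So \<zeta>S \<epsilon>(1)] unfolding D_def by blast
  define L where "L = cmod D + \<epsilon>"
  define c where "c = cmod D / 2"
  have Lc: "L > 0" "c > 0" using D0' \<epsilon> by (auto simp: L_def c_def)
  have Lip: "cmod (\<phi> x - \<phi> y) \<le> L * cmod (x - y)" if "x\<in>ball \<zeta> r" "y\<in>ball \<zeta> r" for x y
  proof -
    have "\<phi> x - \<phi> y = (\<phi> x - \<phi> y - D * (x - y)) + D * (x - y)" by simp
    then have "cmod (\<phi> x - \<phi> y) \<le> cmod (\<phi> x - \<phi> y - D * (x - y)) + cmod (D * (x - y))"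
      by (metis norm_triangle_ineq)
    then have "cmod (\<phi> x - \<phi> y) \<le> cmod (\<phi> x - \<phi> y - D * (x - y)) + cmod D * cmod (x - y)"
      by (simp only: norm_mult)
    moreover have "L * cmod (x - y) = \<epsilon> * cmod (x - y) + cmod D * cmod (x - y)" by (simp add: L_def algebra_simps)
    ultimately show ?thesis using r(3)[OF that] by linarith
  qed
  have anti: "c * cmod (x - \<zeta>) \<le> cmod (\<phi> x - l)" if "x\<in>ball \<zeta> r" for x
  proof -
    have zb: "\<zeta> \<in> ball \<zeta> r" using r(1) by simp
    have "D * (x - \<zeta>) = (\<phi> x - \<phi> \<zeta>) - (\<phi> x - \<phi> \<zeta> - D * (x - \<zeta>))" by simp
    then have "cmod (D * (x - \<zeta>)) \<le> cmod (\<phi> x - \<phi> \<zeta>) + cmod (\<phi> x - \<phi> \<zeta> - D * (x - \<zeta>))"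
      by (metis norm_triangle_ineq4)
    then have 1: "cmod D * cmod (x - \<zeta>) \<le> cmod (\<phi> x - \<phi> \<zeta>) + cmod (\<phi> x - \<phi> \<zeta> - D * (x - \<zeta>))"
      by (simp only: norm_mult)
    have 2: "cmod (\<phi> x - \<phi> \<zeta> - D * (x - \<zeta>)) \<le> \<epsilon> * cmod (x - \<zeta>)" using r(3)[OF that zb] .
    have 3: "c * cmod (x - \<zeta>) \<le> (cmod D - \<epsilon>) * cmod (x - \<zeta>)"
      using \<epsilon>(2) by (intro mult_right_mono) (auto simp: c_def)
    have 4: "(cmod D - \<epsilon>) * cmod (x - \<zeta>) = cmod D * cmod (x - \<zeta>) - \<epsilon> * cmod (x - \<zeta>)"
      by (simp add: algebra_simps)
    show ?thesis using 1 2 3 4 by (simp add: l_def)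
  qed
  have Lip2: "cmod (\<phi> x - l) \<le> L * cmod (x - \<zeta>)" if "x\<in>ball \<zeta> r" for x
    using Lip[OF that, of \<zeta>] r(1) by (simp add: l_def)
  have Qr: "A \<le> (1 - (cmod (\<phi> v))\<^sup>2) / (cmod (l - \<phi> v)) powr real n \<and>
         (1 - (cmod (\<phi> v))\<^sup>2) / (cmod (l - \<phi> v)) powr real n \<le> B"
    if v: "cmod v = 1" "cmod (v - \<zeta>) < min \<delta>0 r" "v \<noteq> \<zeta>" for v
  proof (rule ae_ext[OF holomorphic_on_imp_continuous_on[OF hol] So ae])
    show "cmod v = 1" by fact
    show "dist v \<zeta> < \<delta>0" using v by (simp add: dist_norm)
    have vb: "v \<in> ball \<zeta> r" using v dist_commute[of \<zeta> v] by (simp add: dist_norm)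
    then show "v \<in> S" using r(2) by auto
    have "c * cmod (v - \<zeta>) > 0" using Lc v by simp
    then show "\<phi> v \<noteq> l" using anti[OF vb] by auto
  qed
  have n1: "n \<ge> 1"
  proof (rule ccontr)
    assume "\<not> n \<ge> 1"
    then have n0: "n = 0" by simp
    have "0 < min (min \<delta>0 r) (A / (2 * L))" using AB r Lc by simp
    then obtain v where v: "cmod v = 1" "v \<noteq> \<zeta>" "cmod (v - \<zeta>) < min (min \<delta>0 r) (A / (2 * L))"
      using circle_pt[OF z1] by blast
    have vb: "v \<in> ball \<zeta> r" using v dist_commute[of \<zeta> v] by (simp add: dist_norm)
    have "c * cmod (v - \<zeta>) > 0" using Lc v by simp
    then have ne: "cmod (l - \<phi> v) \<noteq> 0" using anti[OF vb] by (auto simp: norm_minus_commute)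
    have "A \<le> 1 - (cmod (\<phi> v))\<^sup>2" using Qr[of v] v ne n0 by simp
    also have "\<dots> \<le> 2 * (1 - cmod (\<phi> v))"
    proof -
      have "cmod (\<phi> v) \<le> 1" using le1 v by simp
      then have "(1 - cmod (\<phi> v)) * (1 + cmod (\<phi> v)) \<le> (1 - cmod (\<phi> v)) * 2" by (intro mult_left_mono) auto
      then show ?thesis by (simp add: power2_eq_square algebra_simps)
    qed
    also have "1 - cmod (\<phi> v) \<le> cmod (\<phi> v - l)" using norm_triangle_ineq2[of l "\<phi> v"] l1 by (simp add: norm_minus_commute)
    then have "2 * (1 - cmod (\<phi> v)) \<le> 2 * (L * cmod (v - \<zeta>))" using Lip2[OF vb] by simp
    also have "\<dots> < 2 * (L * (A / (2 * L)))" using v Lc by (intro mult_strict_left_mono) auto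
    also have "\<dots> = A" using Lc by simp
    finally show False by simp
  qed
  have Q: "A * (cmod (l - \<phi> v))^n \<le> 1 - (cmod (\<phi> v))\<^sup>2 \<and> 1 - (cmod (\<phi> v))\<^sup>2 \<le> B * (cmod (l - \<phi> v))^n"
    if v: "cmod v = 1" "cmod (v - \<zeta>) < min \<delta>0 r" for v
  proof (cases "v = \<zeta>")
    case True then show ?thesis using n1 l1 by (simp add: l_def power_0_left)
  next
    case False
    have vb: "v \<in> ball \<zeta> r" using v dist_commute[of \<zeta> v] by (simp add: dist_norm)
    have "c * cmod (v - \<zeta>) > 0" using Lc v False by simp
    then have y0: "cmod (l - \<phi> v) > 0" using anti[OF vb] by (auto simp: norm_minus_commute)
    have pw: "(cmod (l - \<phi> v)) powr real n = (cmod (l - \<phi> v))^n" using y0 by (simp add: powr_realpow)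
    have yn: "(cmod (l - \<phi> v))^n > 0" using y0 by simp
    show ?thesis using Qr[OF v False] yn unfolding pw by (simp add: pos_le_divide_eq pos_divide_le_eq)
  qed
  define r' where "r' = min (min r \<delta>0) (kr / (4 * (cmod D * (L + 1))))"
  have r': "r' > 0" "r' \<le> r" "r' \<le> \<delta>0" "cmod D * (L + 1) * r' \<le> kr / 4"
  proof -
    show "r' > 0" using r AB kr D0' Lc by (simp add: r'_def)
    show "r' \<le> r" "r' \<le> \<delta>0" by (auto simp: r'_def)
    have "r' \<le> kr / (4 * (cmod D * (L + 1)))" by (simp add: r'_def)
    then have "cmod D * (L + 1) * r' \<le> cmod D * (L + 1) * (kr / (4 * (cmod D * (L + 1))))"
      using D0' Lc by (intro mult_left_mono) auto
    also have "\<dots> = kr / 4" using D0' Lc by (intro cancel4) simp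
    finally show "cmod D * (L + 1) * r' \<le> kr / 4" .
  qed
  define r2 where "r2 = min (r' / 5) (1/2)"
  have r2: "r2 > 0" "5 * r2 \<le> r'" "r2 \<le> 1/2" using r' by (auto simp: r2_def)
  have sc: "isCont \<sigma> l" using holomorphic_on_imp_continuous_on[OF sh] Uo lU continuous_on_eq_continuous_at by blast
  obtain r0 where r0: "r0 > 0" "\<And>w. dist w l < r0 \<Longrightarrow> dist (\<sigma> w) (\<sigma> l) < r2"
    using sc r2(1) unfolding continuous_at_eps_delta by blast
  obtain rU where rU: "rU > 0" "ball l rU \<subseteq> U" using Uo lU openE by blast
  define r1 where "r1 = min (min r0 rU) (1/2)"
  have r1: "r1 > 0" "ball l r1 \<subseteq> U" "r1 \<le> 1/2" using r0 rU by (auto simp: r1_def)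
  have sb: "cmod (\<sigma> w - \<zeta>) < r2" if "w \<in> ball l r1" for w
    using r0(2)[of w] that sl by (auto simp: r1_def dist_norm norm_minus_commute)
  have w0: "w \<noteq> 0" if "w \<in> ball l r1" for w
    using that r1 l1 by (auto simp: dist_norm)
  have sD: "cmod (\<sigma> w) < 1" if w: "w \<in> ball l r1" "cmod w \<le> 1" "w \<noteq> l" for w
  proof -
    define s where "s = \<sigma> w"
    have s\<zeta>: "cmod (s - \<zeta>) < r2" using sb[OF w(1)] by (simp add: s_def)
    have sn: "cmod s > 1/2" using norm_triangle_ineq2[of \<zeta> s] z1 s\<zeta> r2(3) norm_minus_commute[of s \<zeta>] by linarith
    have s0: "s \<noteq> 0" using sn by auto
    have wU: "w \<in> U" using w r1 by auto
    have fs: "\<phi> (rho s) = rho w" using inv[OF wU] by (simp add: s_def)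
    have nrw: "cmod (rho w) \<ge> 1" using w w0[OF w(1)] by (simp add: norm_rho)
    show ?thesis
    proof (rule ccontr)
      assume "\<not> cmod (\<sigma> w) < 1"
      then have s1: "cmod s \<ge> 1" by (simp add: s_def)
      have z0: "\<zeta> \<noteq> 0" using z1 by auto
      have "cmod (rho s - \<zeta>) = cmod (rho s - rho \<zeta>)" using rho_circle[OF z1] by simp
      also have "\<dots> = cmod (s - \<zeta>) / cmod s" using rho_diff[OF s0 z0] z1 by simp
      also have "\<dots> \<le> cmod (s - \<zeta>)" using s1 by (simp add: divide_le_eq mult_le_cancel_left1)
      finally have "cmod (rho s - \<zeta>) < r" using s\<zeta> r2 r' by linarith
      then have rb: "rho s \<in> ball \<zeta> r" using dist_commute[of \<zeta> "rho s"] by (simp add: dist_norm)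
      have rc: "rho s \<in> cball 0 1" using s1 by (simp add: norm_rho divide_le_eq)
      have "cmod (\<phi> (rho s)) = 1"
      proof (cases "cmod s = 1")
        case False
        then have "rho s \<in> ball 0 1" using s1 by (simp add: norm_rho divide_less_eq)
        then have "cmod (\<phi> (rho s)) < 1" by (rule inside)
        then show ?thesis using fs nrw by simp
      next
        case True then show ?thesis using fs nrw le1[OF rc] by simp
      qed
      moreover have "cmod s = 1"
      proof (rule ccontr)
        assume "cmod s \<noteq> 1"
        then have "rho s \<in> ball 0 1" using s1 by (simp add: norm_rho divide_less_eq)
        then have "cmod (\<phi> (rho s)) < 1" by (rule inside)
        then show False using fs nrw by simp
      qed
      ultimately have ps1: "cmod (\<phi> s) = 1" using rho_circle by simp
      have sv: "cmod (s - \<zeta>) < min \<delta>0 r" using s\<zeta> r2 r' by simp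
      have "A * (cmod (l - \<phi> s))^n \<le> 0" using Q[OF \<open>cmod s = 1\<close> sv] ps1 by simp
      then have "(cmod (l - \<phi> s))^n \<le> 0" using AB by (simp add: mult_le_0_iff)
      then have "\<phi> s = l" using n1 by (metis norm_eq_zero power_eq_0_iff right_minus_eq zero_le_power order_antisym_conv norm_ge_zero)
      moreover have sbr: "s \<in> ball \<zeta> r" using sv dist_commute[of \<zeta> s] by (simp add: dist_norm)
      ultimately have "c * cmod (s - \<zeta>) \<le> 0" using anti[OF sbr] by simp
      then have "s = \<zeta>" using Lc by (simp add: mult_le_0_iff)
      then have "w = l"
        using fs rho_circle[OF z1] rho_circle[OF l1] \<open>\<phi> s = l\<close> by (metis rho_rho)
      then show False using w(3) by simp
    qed
  qed
  define A' where "A' = 1 / (2^(n+1) * (1 + 2*L/(A*c^n)))"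
  define B' where "B' = 4 * B * L^n * 2^n / kr"
  have A'0: "A' > 0" using AB Lc by (simp add: A'_def add_pos_nonneg)
  have B'0: "B' > 0" using AB Lc kr by (simp add: B'_def)
  have est: "A' \<le> (1 - (cmod (\<sigma> w))\<^sup>2) / (cmod (\<zeta> - \<sigma> w)) powr real n \<and>
             (1 - (cmod (\<sigma> w))\<^sup>2) / (cmod (\<zeta> - \<sigma> w)) powr real n \<le> B'"
    if w: "cmod w = 1" "w \<in> ball l r1" "w \<noteq> l" for w
  proof -
    define s where "s = \<sigma> w"
    have s\<zeta>: "cmod (s - \<zeta>) < r2" using sb[OF w(2)] by (simp add: s_def)
    have sn: "cmod s > 1/2" using norm_triangle_ineq2[of \<zeta> s] z1 s\<zeta> r2(3) norm_minus_commute[of s \<zeta>] by linarith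
    have s1: "cmod s < 1" using sD[OF w(2) _ w(3)] w(1) by (simp add: s_def)
    have s0: "s \<noteq> 0" using sn by auto
    define v where "v = s / complex_of_real (cmod s)"
    define u where "u = s / complex_of_real ((cmod s)^2)"
    have urho: "u = rho s"
    proof -
      have "s * cnj s = complex_of_real ((cmod s)^2)" by (rule complex_norm_square[symmetric])
      then show ?thesis using s0 by (simp add: u_def rho_def field_simps)
    qed
    have wU: "w \<in> U" using w r1 by auto
    have fu: "\<phi> u = w" using inv[OF wU] rho_circle[OF w(1)] by (simp add: urho s_def)
    have v1: "cmod v = 1" using s0 by (simp add: v_def norm_divide)
    have vs: "cmod (v - s) = 1 - cmod s"
    proof -
      have "v - s = complex_of_real (1 / cmod s - 1) * s" using s0 by (simp add: v_def field_simps)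
      then have "cmod (v - s) = \<bar>1 / cmod s - 1\<bar> * cmod s" by (simp only: norm_mult norm_of_real)
      also have "\<dots> = 1 - cmod s" using s0 s1 by (simp add: field_simps)
      finally show ?thesis .
    qed
    have us: "cmod (u - s) = 1 / cmod s - cmod s"
    proof -
      have "u - s = complex_of_real (1 / (cmod s)^2 - 1) * s" using s0 by (simp add: u_def field_simps)
      then have "cmod (u - s) = \<bar>1 / (cmod s)^2 - 1\<bar> * cmod s" by (simp only: norm_mult norm_of_real)
      also have "\<bar>1 / (cmod s)^2 - 1\<bar> = 1 / (cmod s)^2 - 1"
        using s0 s1 by (simp add: field_simps power_le_one)
      also have "(1 / (cmod s)^2 - 1) * cmod s = 1 / cmod s - cmod s" using s0 by (simp add: field_simps power2_eq_square)
      finally show ?thesis .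
    qed
    have dm: "1 - cmod s \<le> cmod (s - \<zeta>)" using norm_triangle_ineq2[of \<zeta> s] z1 norm_minus_commute[of s \<zeta>] by simp
    have v\<zeta>: "cmod (v - \<zeta>) \<le> 2 * cmod (s - \<zeta>)"
      using norm_triangle_ineq[of "v - s" "s - \<zeta>"] vs dm by simp
    have u\<zeta>: "cmod (u - \<zeta>) \<le> 5 * cmod (s - \<zeta>)"
    proof -
      have "1 / cmod s - cmod s = (1 - cmod s) * (1 + cmod s) / cmod s" using s0 by (simp add: field_simps)
      also have "\<dots> \<le> (1 - cmod s) * 2 / (1/2)" using s1 sn by (intro frac_le mult_left_mono) auto
      finally have "cmod (u - s) \<le> 4 * cmod (s - \<zeta>)" using us dm by simp
      then show ?thesis using norm_triangle_ineq[of "u - s" "s - \<zeta>"] by simp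
    qed
    have vb: "v \<in> ball \<zeta> r" and ub: "u \<in> ball \<zeta> r" and vr': "cmod (v - \<zeta>) \<le> r'"
      using v\<zeta> u\<zeta> s\<zeta> r2 r' dist_commute[of \<zeta> v] dist_commute[of \<zeta> u] by (auto simp: dist_norm)
    have vQ: "cmod (v - \<zeta>) < min \<delta>0 r" using v\<zeta> s\<zeta> r2 r' by simp
    have small: "cmod D * (L + 1) * cmod (v - \<zeta>) \<le> kr / 4"
    proof -
      have "cmod D * (L + 1) * cmod (v - \<zeta>) \<le> cmod D * (L + 1) * r'" using vr' Lc by (intro mult_left_mono) auto
      then show ?thesis using r'(4) by linarith
    qed
    have c: "A' \<le> (1 - (cmod s)\<^sup>2) / (cmod (\<zeta> - s)) powr real n \<and>
             (1 - (cmod s)\<^sup>2) / (cmod (\<zeta> - s)) powr real n \<le> B'"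
      unfolding A'_def B'_def
      using core[OF z1 l1 sn s1 _ v_def u_def r(3)[OF ub vb] Lip[OF ub vb] anti[OF vb] Lip2[OF vb]
          conjunct1[OF Q[OF v1 vQ]] conjunct2[OF Q[OF v1 vQ]] kr_def[symmetric] kr \<epsilon>(3) small AB(2,3) Lc n1]
        fu w(1) by simp
    then show ?thesis by (simp add: s_def)
  qed
  show ?thesis
    unfolding order_of_contact_def \<phi>_def[symmetric] l_def[symmetric]
  proof (intro conjI)
    show "l \<in> sphere 0 1" using l1 by simp
    show "\<exists>V. open V \<and> l \<in> V \<and> \<sigma> holomorphic_on (V \<inter> ball 0 1) \<and> \<sigma> ` (V \<inter> ball 0 1) \<subseteq> ball 0 1"
    proof (intro exI[of _ "ball l r1"] conjI)
      show "open (ball l r1)" by simp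
      show "l \<in> ball l r1" using r1 by simp
      show "\<sigma> holomorphic_on (ball l r1 \<inter> ball 0 1)" using sh r1(2) holomorphic_on_subset by blast
      show "\<sigma> ` (ball l r1 \<inter> ball 0 1) \<subseteq> ball 0 1"
      proof
        fix y assume "y \<in> \<sigma> ` (ball l r1 \<inter> ball 0 1)"
        then obtain w where w: "w \<in> ball l r1" "w \<in> ball 0 1" "y = \<sigma> w" by blast
        have "w \<noteq> l" using w(2) l1 by auto
        then show "y \<in> ball 0 1" using sD[OF w(1)] w by simp
      qed
    qed
    show "(\<sigma> \<longlongrightarrow> \<sigma> l) (at l within ball 0 1)"
      by (rule tendsto_within_subset[OF sc[unfolded isCont_def]]) simp
    show "\<sigma> l \<in> sphere 0 1" using sl z1 by simp
    show "\<exists>\<delta> A B. 0 < \<delta> \<and> 0 < A \<and> 0 < B \<and>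
        (AE \<theta> in lborel. dist (cis \<theta>) l < \<delta> \<longrightarrow>
           A \<le> (1 - (norm (\<sigma> (cis \<theta>)))\<^sup>2) / (norm (\<sigma> l - \<sigma> (cis \<theta>))) powr (real n) \<and>
           (1 - (norm (\<sigma> (cis \<theta>)))\<^sup>2) / (norm (\<sigma> l - \<sigma> (cis \<theta>))) powr (real n) \<le> B)"
    proof -
      have AEg: "AE \<theta> in lborel. dist (cis \<theta>) l < r1 \<longrightarrow>
           A' \<le> (1 - (norm (\<sigma> (cis \<theta>)))\<^sup>2) / (norm (\<sigma> l - \<sigma> (cis \<theta>))) powr (real n) \<and>
           (1 - (norm (\<sigma> (cis \<theta>)))\<^sup>2) / (norm (\<sigma> l - \<sigma> (cis \<theta>))) powr (real n) \<le> B'"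
      proof -
        have pt: "A' \<le> (1 - (norm (\<sigma> (cis \<theta>)))\<^sup>2) / (norm (\<sigma> l - \<sigma> (cis \<theta>))) powr (real n) \<and>
           (1 - (norm (\<sigma> (cis \<theta>)))\<^sup>2) / (norm (\<sigma> l - \<sigma> (cis \<theta>))) powr (real n) \<le> B'"
          if ne: "cis \<theta> \<noteq> l" and d: "dist (cis \<theta>) l < r1" for \<theta>
        proof -
          have "cis \<theta> \<in> ball l r1" using d dist_commute[of l "cis \<theta>"] by simp
          then show ?thesis using est[of "cis \<theta>"] ne sl by simp
        qed
        have "AE \<theta> in lborel. cis \<theta> \<noteq> l \<longrightarrow> (dist (cis \<theta>) l < r1 \<longrightarrow>
           A' \<le> (1 - (norm (\<sigma> (cis \<theta>)))\<^sup>2) / (norm (\<sigma> l - \<sigma> (cis \<theta>))) powr (real n) \<and>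
           (1 - (norm (\<sigma> (cis \<theta>)))\<^sup>2) / (norm (\<sigma> l - \<sigma> (cis \<theta>))) powr (real n) \<le> B')"
          by (intro AE_I2 impI) (rule pt; assumption)
        then show ?thesis by (rule AE_mp[OF AE_cis_ne[of l]])
      qed
      show ?thesis using r1(1) A'0 B'0 AEg by blast
    qed
  qed
qed
end
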